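(* Let $G=(V,E,\omega)$ be a graph with $V=\{v_1,\dots,v_n\}$, and let $S=\{v_{i_1},\dots,v_{i_p}\}$ (with $i_1<\dots<i_p$) be a structural set of $G$. Then $\mathcal{R}_S(G)$ is the graph whose weighted adjacency matrix (with vertices ordered $v_{i_1},\dots,v_{i_p}$) is $r\big(M(G)-\lambda I;\{i_1,\dots,i_p\}\big)+\lambda I$.
   Context: $\mathbb{W}$ is the field of rational functions in a complex variable $\lambda$ with complex coefficients. A graph $G=(V,E,\omega)$ is a finite directed graph with vertex set $V=\{v_1,\dots,v_n\}$, edges $E$ (loops allowed, at most one edge $e_{ij}$ from $v_i$ to $v_j$), weights $\omega:E\to\mathbb{W}\setminus\{0\}$, $\omega(e_{ij})=0$ for non-edges; $M(G)_{ij}=\omega(e_{ij})$. $\bar S=V\setminus S$; $\ell(G)$ is $G$ without loops; $G|_U$ is an induced subgraph. A path is a sequence of distinct vertices $u_1,\dots,u_m$ ($m\ge2$) with edges $u_k\to u_{k+1}$; a cycle is the same with $u_1=u_m$, $u_1,\dots,u_{m-1}$ distinct; $u_2,\dots,u_{m-1}$ are interior. A nonempty $S\subseteq V$ is a structural set if $\ell(G)|_{\bar S}$ has no cycles and $\omega(e_{ii})\ne\lambda$ for $v_i\in\bar S$. For $v_i,v_j\in S$, $\mathcal{B}_{ij}(G;S)$ is the set of paths or cycles from $v_i$ to $v_j$ with no interior vertex in $S$; $\mathcal{P}_\omega(u_1,\dots,u_m)=\omega(u_1u_2)\prod_{k=2}^{m-1}\frac{\omega(u_ku_{k+1})}{\lambda-\omega(u_ku_k)}$;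 $\mathcal{R}_S(G)$ is the graph on $S$ with an edge $v_i\to v_j$ iff $\mathcal{B}_{ij}(G;S)\ne\emptyset$, of weight $\sum_{\beta\in\mathcal{B}_{ij}(G;S)}\mathcal{P}_\omega(\beta)$. Matrix reduction: for $N\in\mathbb{W}^{n\times n}$ and nonempty $\mathcal{I}\subseteq\{1,\dots,n\}$ with complement $\bar{\mathcal{I}}$, let $A$ ($D$) be the principal submatrix indexed by $\bar{\mathcal{I}}$ ($\mathcal{I}$), $B$ the submatrix with rows $\bar{\mathcal{I}}$, columns $\mathcal{I}$, $C$ the submatrix with rows $\mathcal{I}$, columns $\bar{\mathcal{I}}$ (indices in increasing order); if $A$ is invertible, $r(N;\mathcal{I})=D-CA^{-1}B$ (and $r(N;\{1,\dots,n\})=N$). *)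

theory Defs
  imports "Jordan_Normal_Form.Matrix" "Jordan_Normal_Form.DL_Submatrix"
    "HOL-Computational_Algebra.Polynomial" "HOL-Computational_Algebra.Fraction_Field"
begin

type_synonym W = "complex poly fract"

definition lam :: W where "lam = Fract [:0, 1:] 1"

text \<open>A graph on vertices 0..<n (v_(i+1) corresponds to index i) is given by its weighted
 adjacency matrix M (n x n, entries in W); an edge i->j exists iff M(i,j) is nonzero.\<close>

definition is_edge :: "W mat \<Rightarrow> nat \<Rightarrow> nat \<Rightarrow> bool" where
  "is_edge M i j \<longleftrightarrow> i < dim_row M \<and> j < dim_row M \<and> M $$ (i, j) \<noteq> 0"

definition edges_along :: "W mat \<Rightarrow> nat list \<Rightarrow> bool" where
  "edges_along M xs \<longleftrightarrow> (\<forall>k. Suc k < length xs \<longrightarrow> is_edge M (xs ! k) (xs ! Suc k))"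

definition is_path :: "W mat \<Rightarrow> nat list \<Rightarrow> bool" where
  "is_path M xs \<longleftrightarrow> length xs \<ge> 2 \<and> distinct xs \<and> edges_along M xs"

definition is_cycle :: "W mat \<Rightarrow> nat list \<Rightarrow> bool" where
  "is_cycle M xs \<longleftrightarrow> length xs \<ge> 2 \<and> hd xs = last xs \<and> distinct (butlast xs) \<and> edges_along M xs"

definition loopless :: "W mat \<Rightarrow> W mat" where
  "loopless M = mat (dim_row M) (dim_col M) (\<lambda>(i, j). if i = j then 0 else M $$ (i, j))"

text \<open>Cycles of the induced subgraph on U are the cycles of the graph all of whose vertices lie in U.\<close>
definition has_cycle_in :: "W mat \<Rightarrow> nat set \<Rightarrow> bool" where
  "has_cycle_in M U \<longleftrightarrow> (\<exists>xs. is_cycle M xs \<and> set xs \<subseteq> U)"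

definition structural_set :: "W mat \<Rightarrow> nat set \<Rightarrow> bool" where
  "structural_set M S \<longleftrightarrow> S \<noteq> {} \<and> S \<subseteq> {0..<dim_row M} \<and>
     \<not> has_cycle_in (loopless M) ({0..<dim_row M} - S) \<and>
     (\<forall>i \<in> {0..<dim_row M} - S. M $$ (i, i) \<noteq> lam)"

definition branches :: "W mat \<Rightarrow> nat set \<Rightarrow> nat \<Rightarrow> nat \<Rightarrow> nat list set" where
  "branches M S i j = {xs. (is_path M xs \<or> is_cycle M xs) \<and> hd xs = i \<and> last xs = j \<and>
     (\<forall>k. 0 < k \<and> k < length xs - 1 \<longrightarrow> xs ! k \<notin> S)}"

definition path_weight :: "W mat \<Rightarrow> nat list \<Rightarrow> W" where
  "path_weight M xs = M $$ (xs ! 0, xs ! 1) *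
     (\<Prod>k\<in>{1..<length xs - 1}. M $$ (xs ! k, xs ! Suc k) / (lam - M $$ (xs ! k, xs ! k)))"

text \<open>Weighted adjacency matrix of R_S(G), vertices ordered increasingly (pick S a is the a-th
 smallest element of S); the entry is 0 when there is no edge, i.e. when B_ij is empty.\<close>
definition isospectral_reduction :: "W mat \<Rightarrow> nat set \<Rightarrow> W mat" where
  "isospectral_reduction M S = mat (card S) (card S) (\<lambda>(a, b).
     (let i = pick S a; j = pick S b in
      if branches M S i j = {} then 0 else (\<Sum>xs\<in>branches M S i j. path_weight M xs)))"

definition mat_reduction :: "W mat \<Rightarrow> nat set \<Rightarrow> W mat" where
  "mat_reduction N I =
    (let Ic = {0..<dim_row N} - I;
         A = submatrix N Ic Ic; B = submatrix N Ic I;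
         C = submatrix N I Ic; D = submatrix N I I;
         Ainv = (SOME X. inverts_mat A X \<and> inverts_mat X A)
     in if I = {0..<dim_row N} then N else D - C * Ainv * B)"

definition reduction_defined :: "W mat \<Rightarrow> nat set \<Rightarrow> bool" where
  "reduction_defined N I \<longleftrightarrow> I = {0..<dim_row N} \<or>
     invertible_mat (submatrix N ({0..<dim_row N} - I) ({0..<dim_row N} - I))"

end

theory Submission
  imports Defs "Jordan_Normal_Form.Determinant"
begin

lemma edges_along_succ: "edges_along M xs = successively (is_edge M) xs"
  by (simp add: edges_along_def successively_conv_nth)

lemma distinct_succ_neq: "distinct xs \<Longrightarrow> successively (\<noteq>) xs"
  by (induction xs rule: induct_list012) auto

lemma succ_conj: "successively P xs \<Longrightarrow> successively Q xs \<Longrightarrow> successively (\<lambda>x y. P x y \<and> Q x y) xs"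
  by (induction xs rule: induct_list012) auto

lemma succ_set: "\<forall>x\<in>set xs. R x \<Longrightarrow> successively (\<lambda>x y. R x \<and> R y) xs"
  by (induction xs rule: induct_list012) auto

definition gw :: "W mat \<Rightarrow> nat \<Rightarrow> nat \<Rightarrow> W" where
  "gw M a b = M $$ (a, b) / (lam - M $$ (a, a))"

fun wt :: "W mat \<Rightarrow> nat list \<Rightarrow> W" where
  "wt M [] = 1"
| "wt M [x] = 1 / (lam - M $$ (x, x))"
| "wt M (x # y # zs) = gw M x y * wt M (y # zs)"

fun hh :: "W mat \<Rightarrow> nat list \<Rightarrow> W" where
  "hh M [] = 1"
| "hh M [x] = 1"
| "hh M (x # y # zs) = gw M x y * hh M (y # zs)"

lemma hh_prod: "hh M xs = (\<Prod>k\<in>{0..<length xs - 1}. gw M (xs ! k) (xs ! Suc k))"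
proof (induction M xs rule: hh.induct)
  case (3 M x y zs)
  have "length (x # y # zs) - 1 = Suc (length (y # zs) - 1)" by simp
  then show ?case using 3 by (simp only: prod.atLeast0_lessThan_Suc_shift) (simp add: o_def)
qed auto

lemma path_weight_Cons: "zs \<noteq> [] \<Longrightarrow> path_weight M (x # zs) = M $$ (x, hd zs) * hh M zs"
proof -
  assume zs: "zs \<noteq> []"
  have e: "{1..<length (x # zs) - 1} = {Suc 0..<Suc (length zs - 1)}" using zs by simp
  show ?thesis unfolding path_weight_def hh_prod e prod.atLeast_Suc_lessThan_Suc_shift
    using zs by (simp add: o_def gw_def hd_conv_nth)
qed

lemma wt_snoc: "ys \<noteq> [] \<Longrightarrow> wt M ys * M $$ (last ys, j) = hh M (ys @ [j])"
  by (induction M ys rule: wt.induct) (auto simp: gw_def)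

lemma wt_nz: "wt M ys \<noteq> 0 \<Longrightarrow> successively (\<lambda>x y. M $$ (x, y) \<noteq> 0) ys"
  by (induction M ys rule: wt.induct) (auto simp: gw_def)

definition DL :: "nat set \<Rightarrow> nat list set" where
  "DL T = {ys. set ys \<subseteq> T \<and> distinct ys \<and> ys \<noteq> []}"

lemma finite_DL: assumes "finite T" shows "finite (DL T)"
proof -
  have "DL T \<subseteq> {xs. set xs \<subseteq> T \<and> length xs \<le> card T}"
  proof
    fix xs assume "xs \<in> DL T"
    then have "set xs \<subseteq> T" "distinct xs" unfolding DL_def by auto
    then show "xs \<in> {xs. set xs \<subseteq> T \<and> length xs \<le> card T}"
      using distinct_card[of xs] card_mono[OF assms \<open>set xs \<subseteq> T\<close>] by auto
  qed
  then show ?thesis using finite_lists_length_le[OF assms] finite_subset by blast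
qed

definition Q :: "W mat \<Rightarrow> nat set \<Rightarrow> nat \<Rightarrow> nat \<Rightarrow> W" where
  "Q M T u v = (\<Sum>ys\<in>{ys\<in>DL T. hd ys = u \<and> last ys = v}. wt M ys)"

lemma is_edge_loopless:
  assumes "dim_col M = dim_row M" "x < dim_row M" "y < dim_row M" "x \<noteq> y" "M $$ (x, y) \<noteq> 0"
  shows "is_edge (loopless M) x y"
  using assms unfolding is_edge_def loopless_def by simp

lemma cyc_zero:
  assumes acyc: "\<not> has_cycle_in (loopless M) T" and sq: "dim_col M = dim_row M"
    and Tn: "T \<subseteq> {0..<dim_row M}" and u: "u \<in> T" and zs: "zs \<in> DL T"
    and hdz: "hd zs \<noteq> u" and uz: "u \<in> set zs" and e: "M $$ (u, hd zs) \<noteq> 0"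
  shows "wt M zs = 0"
proof (rule ccontr)
  assume "wt M zs \<noteq> 0"
  then have sz: "successively (\<lambda>x y. M $$ (x, y) \<noteq> 0) zs" by (rule wt_nz)
  obtain as bs where zsd: "zs = as @ u # bs" using split_list[OF uz] by blast
  have asn: "as \<noteq> []" using hdz zsd by auto
  have hdas: "hd as = hd zs" using asn zsd by simp
  let ?xs = "u # as @ [u]"
  have dz: "distinct zs" "set zs \<subseteq> T" using zs unfolding DL_def by auto
  have s1: "successively (\<lambda>x y. M $$ (x, y) \<noteq> 0) ?xs"
  proof -
    have "successively (\<lambda>x y. M $$ (x, y) \<noteq> 0) ((as @ [u]) @ bs)" using sz zsd by simp
    then have "successively (\<lambda>x y. M $$ (x, y) \<noteq> 0) (as @ [u])"
      by (simp only: successively_append_iff)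
    then show ?thesis using e hdas asn by (simp add: successively_Cons)
  qed
  have s2: "successively (\<noteq>) ?xs"
  proof -
    have d: "distinct (u # as)" using dz zsd by auto
    have "successively (\<noteq>) ((u # as) @ [u])"
    proof -
      have "last (u # as) \<in> set as" using asn by simp
      then have "last (u # as) \<noteq> u" using d by auto
      then show ?thesis unfolding successively_append_iff using distinct_succ_neq[OF d] by simp
    qed
    then show ?thesis by simp
  qed
  have setx: "set ?xs \<subseteq> T" using dz zsd by auto
  have s3: "successively (\<lambda>x y. x \<in> T \<and> y \<in> T) ?xs" using succ_set[of ?xs "\<lambda>x. x \<in> T"] setx by auto
  have "successively (is_edge (loopless M)) ?xs"
    using succ_conj[OF succ_conj[OF s1 s2] s3]
  proof (rule successively_mono)
    fix x y assume "(M $$ (x, y) \<noteq> 0 \<and> x \<noteq> y) \<and> x \<in> T \<and> y \<in> T"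
    assume h: "(M $$ (x, y) \<noteq> 0 \<and> x \<noteq> y) \<and> x \<in> T \<and> y \<in> T"
    then have "x < dim_row M" "y < dim_row M" using Tn by auto
    then show "is_edge (loopless M) x y" using is_edge_loopless[OF sq, of x y] h by blast
  qed
  moreover have "distinct (butlast ?xs)" using dz zsd by (simp add: butlast_append)
  ultimately have "is_cycle (loopless M) ?xs" unfolding is_cycle_def edges_along_succ by simp
  then show False using acyc setx unfolding has_cycle_in_def by blast
qed

lemma Q_decomp:
  assumes acyc: "\<not> has_cycle_in (loopless M) T" and sq: "dim_col M = dim_row M"
    and Tn: "T \<subseteq> {0..<dim_row M}" and u: "u \<in> T" and v: "v \<in> T"
    and diag: "M $$ (u, u) \<noteq> lam"
  shows "(lam - M $$ (u, u)) * Q M T u v - (\<Sum>w\<in>T-{u}. M $$ (u, w) * Q M T w v)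
         = (if u = v then 1 else 0)"
proof -
  have fT: "finite T" using Tn finite_subset by blast
  have fD: "finite (DL T)" by (rule finite_DL[OF fT])
  define P where "P = {ys\<in>DL T. hd ys = u \<and> last ys = v}"
  define P1 where "P1 = {ys\<in>P. length ys = 1}"
  define P2 where "P2 = {ys\<in>P. length ys \<noteq> 1}"
  define Z where "Z = {zs\<in>DL T. last zs = v \<and> hd zs \<noteq> u}"
  define Z1 where "Z1 = {zs\<in>Z. u \<notin> set zs}"
  define Z0 where "Z0 = {zs\<in>Z. u \<in> set zs}"
  have fP: "finite P" unfolding P_def using fD by simp
  have fZ: "finite Z" unfolding Z_def using fD by simp
  have nz: "lam - M $$ (u, u) \<noteq> 0" using diag by simp
  have P1e: "P1 = (if u = v then {[u]} else {})"
  proof -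
    have "ys \<in> P1 \<longleftrightarrow> u = v \<and> ys = [u]" for ys
    proof
      assume "ys \<in> P1"
      then have "length ys = 1" "hd ys = u" "last ys = v" unfolding P1_def P_def by auto
      then show "u = v \<and> ys = [u]" by (cases ys) auto
    next
      assume "u = v \<and> ys = [u]"
      then show "ys \<in> P1" unfolding P1_def P_def DL_def using u by auto
    qed
    then show ?thesis by auto
  qed
  have sP1: "(\<Sum>ys\<in>P1. wt M ys) * (lam - M $$ (u, u)) = (if u = v then 1 else 0)"
    unfolding P1e using nz by (cases "u = v") auto
  have QP: "Q M T u v = (\<Sum>ys\<in>P1. wt M ys) + (\<Sum>ys\<in>P2. wt M ys)"
  proof -
    have "P = P1 \<union> P2" "P1 \<inter> P2 = {}" unfolding P1_def P2_def by auto
    then show ?thesis unfolding Q_def P_def[symmetric] using fP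
      by (simp add: sum.union_disjoint[symmetric])
  qed
  have sP2: "(\<Sum>ys\<in>P2. wt M ys) * (lam - M $$ (u, u)) = (\<Sum>ys\<in>P2. M $$ (u, hd (tl ys)) * wt M (tl ys))"
    unfolding sum_distrib_right
  proof (rule sum.cong[OF refl])
    fix ys assume "ys \<in> P2"
    then have "length ys \<noteq> 1" "hd ys = u" "ys \<noteq> []" unfolding P2_def P_def DL_def by auto
    then obtain y zs where ys: "ys = u # y # zs" by (cases ys rule: remdups_adj.cases) auto
    show "wt M ys * (lam - M $$ (u, u)) = M $$ (u, hd (tl ys)) * wt M (tl ys)"
      unfolding ys using nz by (simp add: gw_def)
  qed
  have injtl: "inj_on tl P2"
  proof (rule inj_onI)
    fix x y assume "x \<in> P2" "y \<in> P2" "tl x = tl y"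
    then show "x = y" unfolding P2_def P_def DL_def by (metis (mono_tags, lifting) list.collapse mem_Collect_eq)
  qed
  have imtl: "tl ` P2 = Z1"
  proof
    show "tl ` P2 \<subseteq> Z1"
    proof
      fix zs assume "zs \<in> tl ` P2"
      then obtain ys where ys: "ys \<in> P2" "zs = tl ys" by blast
      then have "length ys \<noteq> 1" "hd ys = u" "ys \<noteq> []" "last ys = v" "set ys \<subseteq> T" "distinct ys"
        unfolding P2_def P_def DL_def by auto
      then obtain y ws where ysd: "ys = u # y # ws" by (cases ys rule: remdups_adj.cases) auto
      show "zs \<in> Z1" using ys(2) \<open>last ys = v\<close> \<open>set ys \<subseteq> T\<close> \<open>distinct ys\<close> unfolding ysd Z1_def Z_def DL_def by auto
    qed
  next
    show "Z1 \<subseteq> tl ` P2"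
    proof
      fix zs assume z: "zs \<in> Z1"
      then have "u # zs \<in> P2" using u unfolding Z1_def Z_def P2_def P_def DL_def by auto
      then show "zs \<in> tl ` P2" by (metis image_eqI list.sel(3))
    qed
  qed
  have sZ1: "(\<Sum>ys\<in>P2. M $$ (u, hd (tl ys)) * wt M (tl ys)) = (\<Sum>zs\<in>Z1. M $$ (u, hd zs) * wt M zs)"
    unfolding imtl[symmetric] sum.reindex[OF injtl] by simp
  have sZ0: "(\<Sum>zs\<in>Z0. M $$ (u, hd zs) * wt M zs) = 0"
  proof (rule sum.neutral, rule ballI)
    fix zs assume "zs \<in> Z0"
    then have zs: "zs \<in> DL T" "hd zs \<noteq> u" "u \<in> set zs" unfolding Z0_def Z_def by auto
    show "M $$ (u, hd zs) * wt M zs = 0"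
    proof (cases "M $$ (u, hd zs) = 0")
      case False then show ?thesis using cyc_zero[OF acyc sq Tn u zs] by simp
    qed simp
  qed
  have sZ: "(\<Sum>zs\<in>Z. M $$ (u, hd zs) * wt M zs) = (\<Sum>zs\<in>Z1. M $$ (u, hd zs) * wt M zs)"
  proof -
    have "Z = Z1 \<union> Z0" "Z1 \<inter> Z0 = {}" unfolding Z1_def Z0_def by auto
    then show ?thesis using fZ sZ0 by (simp add: sum.union_disjoint)
  qed
  have sW: "(\<Sum>w\<in>T-{u}. M $$ (u, w) * Q M T w v) = (\<Sum>zs\<in>Z. M $$ (u, hd zs) * wt M zs)"
  proof -
    have Zu: "Z = (\<Union>w\<in>T-{u}. {ys\<in>DL T. hd ys = w \<and> last ys = v})"
      unfolding Z_def DL_def by (auto dest: hd_in_set)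
    have "(\<Sum>zs\<in>Z. M $$ (u, hd zs) * wt M zs)
        = (\<Sum>w\<in>T-{u}. \<Sum>zs\<in>{ys\<in>DL T. hd ys = w \<and> last ys = v}. M $$ (u, hd zs) * wt M zs)"
      unfolding Zu using fT fD by (subst sum.UNION_disjoint) auto
    also have "\<dots> = (\<Sum>w\<in>T-{u}. M $$ (u, w) * Q M T w v)"
      unfolding Q_def sum_distrib_left by (rule sum.cong[OF refl], rule sum.cong) auto
    finally show ?thesis by simp
  qed
  have "(lam - M $$ (u, u)) * Q M T u v = (if u = v then 1 else 0) + (\<Sum>w\<in>T-{u}. M $$ (u, w) * Q M T w v)"
    unfolding QP distrib_left using sP1 sP2 sZ1 sZ sW by (simp add: mult.commute)
  then show ?thesis by simp
qed

lemma succ_edge_set: "successively (is_edge M) xs \<Longrightarrow> length xs \<ge> 2 \<Longrightarrow> set xs \<subseteq> {0..<dim_row M}"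
proof (induction xs rule: induct_list012)
  case (3 x y zs)
  then show ?case by (cases zs) (auto simp: is_edge_def)
qed auto

lemma branch_facts:
  assumes "xs \<in> branches M S i j"
  shows "length xs \<ge> 2" "hd xs = i" "last xs = j" "set xs \<subseteq> {0..<dim_row M}"
    "distinct (butlast xs)" "successively (is_edge M) xs"
    "\<And>k. 0 < k \<Longrightarrow> k < length xs - 1 \<Longrightarrow> xs ! k \<notin> S"
proof -
  from assms have h: "is_path M xs \<or> is_cycle M xs" "hd xs = i" "last xs = j"
    "\<And>k. 0 < k \<Longrightarrow> k < length xs - 1 \<Longrightarrow> xs ! k \<notin> S"
    unfolding branches_def by auto
  show "length xs \<ge> 2" "successively (is_edge M) xs" "distinct (butlast xs)"
    using h(1) unfolding is_path_def is_cycle_def edges_along_succ by (auto simp: distinct_butlast)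
  then show "set xs \<subseteq> {0..<dim_row M}" using succ_edge_set by blast
  show "hd xs = i" "last xs = j" "\<And>k. 0 < k \<Longrightarrow> k < length xs - 1 \<Longrightarrow> xs ! k \<notin> S" using h by auto
qed

lemma finite_branches: "finite (branches M S i j)"
proof -
  have "branches M S i j \<subseteq> {xs. set xs \<subseteq> {0..<dim_row M} \<and> length xs \<le> Suc (dim_row M)}"
  proof
    fix xs assume xs: "xs \<in> branches M S i j"
    note bf = branch_facts[OF xs]
    have "set (butlast xs) \<subseteq> {0..<dim_row M}" using bf(4) by (meson in_set_butlastD subset_iff)
    then have "length (butlast xs) \<le> dim_row M"
      using distinct_card[OF bf(5)] card_mono[of "{0..<dim_row M}" "set (butlast xs)"] by simp
    then show "xs \<in> {xs. set xs \<subseteq> {0..<dim_row M} \<and> length xs \<le> Suc (dim_row M)}" using bf(4) by simp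
  qed
  then show ?thesis using finite_lists_length_le[of "{0..<dim_row M}"] finite_subset by blast
qed

lemma path_weight_2: "path_weight M [i, j] = M $$ (i, j)"
  unfolding path_weight_def by simp

lemma branch_sum:
  assumes Sd: "S \<subseteq> {0..<dim_row M}" and i: "i \<in> S" and j: "j \<in> S"
  shows "(\<Sum>xs\<in>branches M S i j. path_weight M xs)
       = M $$ (i, j) + (\<Sum>ys\<in>DL ({0..<dim_row M} - S). M $$ (i, hd ys) * wt M ys * M $$ (last ys, j))"
proof -
  define n where "n = dim_row M"
  define T where "T = {0..<n} - S"
  define B where "B = branches M S i j"
  define B2 where "B2 = {xs\<in>B. length xs = 2}"
  define B3 where "B3 = {xs\<in>B. length xs \<noteq> 2}"
  have fB: "finite B" unfolding B_def by (rule finite_branches)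
  have fD: "finite (DL T)" unfolding T_def by (rule finite_DL) simp
  have in_n: "i < n" "j < n" using Sd i j unfolding n_def by auto
  define F where "F ys = M $$ (i, hd ys) * wt M ys * M $$ (last ys, j)" for ys
  define f where "f ys = i # ys @ [j]" for ys
  have memB: "f ys \<in> B" if ys: "ys \<in> DL T" and Fnz: "F ys \<noteq> 0" for ys
  proof -
    have ysd: "set ys \<subseteq> T" "distinct ys" "ys \<noteq> []" using ys unfolding DL_def by auto
    have e1: "M $$ (i, hd ys) \<noteq> 0" "wt M ys \<noteq> 0" "M $$ (last ys, j) \<noteq> 0" using Fnz unfolding F_def by auto
    have s1: "successively (\<lambda>x y. M $$ (x, y) \<noteq> 0) (f ys)"
      unfolding f_def using wt_nz[OF e1(2)] e1 ysd(3) by (simp add: successively_Cons successively_append_iff)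
    have setf: "set (f ys) \<subseteq> {0..<n}" unfolding f_def using ysd(1) in_n unfolding T_def by auto
    have "\<forall>x\<in>set (f ys). x < n" using setf by auto
    then have "successively (\<lambda>x y. M $$ (x, y) \<noteq> 0 \<and> (x < n \<and> y < n)) (f ys)"
      using succ_conj[OF s1 succ_set[of "f ys" "\<lambda>x. x < n"]] by blast
    then have "successively (is_edge M) (f ys)"
      by (rule successively_mono) (auto simp: is_edge_def n_def)
    then have ea: "edges_along M (f ys)" unfolding edges_along_succ .
    have iT: "i \<notin> T" "j \<notin> T" using i j unfolding T_def by auto
    have pc: "is_path M (f ys) \<or> is_cycle M (f ys)"
    proof (cases "i = j")
      case True
      have "distinct (butlast (f ys))" unfolding f_def using ysd iT by (auto simp: butlast_append)
      then show ?thesis unfolding is_cycle_def f_def using ea True unfolding f_def by simp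
    next
      case False
      have "distinct (f ys)" unfolding f_def using ysd iT False by auto
      then show ?thesis unfolding is_path_def using ea unfolding f_def by simp
    qed
    have int: "f ys ! k \<notin> S" if "0 < k" "k < length (f ys) - 1" for k
    proof -
      obtain k' where k': "k = Suc k'" using \<open>0 < k\<close> gr0_conv_Suc by blast
      have "k' < length ys" using that k' unfolding f_def by simp
      then have "f ys ! k = ys ! k'" unfolding f_def k' by (simp add: nth_append)
      moreover have "ys ! k' \<in> T" using \<open>k' < length ys\<close> ysd(1) nth_mem by blast
      ultimately show ?thesis unfolding T_def by simp
    qed
    show ?thesis unfolding B_def branches_def using pc int unfolding f_def by auto
  qed
  have injf: "inj_on f (DL T)" unfolding f_def inj_on_def by simp
  define Y where "Y = {ys\<in>DL T. f ys \<in> B}"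
  have imf: "f ` Y = B3"
  proof
    show "f ` Y \<subseteq> B3" unfolding Y_def B3_def f_def DL_def by auto
  next
    show "B3 \<subseteq> f ` Y"
    proof
      fix xs assume xs: "xs \<in> B3"
      then have xB: "xs \<in> branches M S i j" "length xs \<noteq> 2" unfolding B3_def B_def by auto
      note bf = branch_facts[OF xB(1)]
      define ys where "ys = butlast (tl xs)"
      have l3: "length xs \<ge> 3" using bf(1) xB(2) by simp
      have xsd: "xs = f ys"
      proof -
        have "xs = hd xs # tl xs" using l3 by (cases xs) auto
        moreover have "tl xs \<noteq> []" using l3 by (cases xs) auto
        then have "tl xs = butlast (tl xs) @ [last (tl xs)]" by simp
        moreover have "last (tl xs) = last xs" using l3 by (cases xs) auto
        ultimately show ?thesis unfolding f_def ys_def using bf(2,3) by metis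
      qed
      have lys: "length xs = length ys + 2" using xsd unfolding f_def by simp
      have "ys \<noteq> []" using lys l3 by auto
      moreover have "distinct ys" using bf(5) unfolding xsd f_def by (simp add: butlast_append)
      moreover have "set ys \<subseteq> T"
      proof
        fix y assume "y \<in> set ys"
        then obtain k where k: "k < length ys" "ys ! k = y" by (meson in_set_conv_nth)
        have "xs ! Suc k = y" unfolding xsd f_def using k by (simp add: nth_append)
        moreover have "xs ! Suc k \<notin> S" using bf(7)[of "Suc k"] k lys by simp
        moreover have "xs ! Suc k \<in> set xs" using k lys by simp
        ultimately show "y \<in> T" using bf(4) unfolding T_def n_def by auto
      qed
      ultimately have "ys \<in> Y" unfolding Y_def DL_def using xsd xB(1) B_def by auto
      then show "xs \<in> f ` Y" using xsd by blast
    qed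
  qed
  have pwf: "path_weight M (f ys) = F ys" if "ys \<noteq> []" for ys
    unfolding f_def F_def using that path_weight_Cons[of "ys @ [j]" M i] wt_snoc[OF that, of M j]
    by (simp add: mult.assoc)
  have s3: "(\<Sum>xs\<in>B3. path_weight M xs) = (\<Sum>ys\<in>DL T. F ys)"
  proof -
    have "(\<Sum>xs\<in>B3. path_weight M xs) = (\<Sum>ys\<in>Y. path_weight M (f ys))"
    proof -
      have "inj_on f Y" by (rule inj_on_subset[OF injf]) (auto simp: Y_def)
      then show ?thesis unfolding imf[symmetric] by (simp add: sum.reindex)
    qed
    also have "\<dots> = (\<Sum>ys\<in>Y. F ys)" by (rule sum.cong) (auto simp: Y_def DL_def pwf)
    also have "\<dots> = (\<Sum>ys\<in>DL T. F ys)"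
      by (rule sum.mono_neutral_left[OF fD]) (auto simp: Y_def memB)
    finally show ?thesis .
  qed
  have s2: "(\<Sum>xs\<in>B2. path_weight M xs) = M $$ (i, j)"
  proof -
    have B2e: "B2 = (if M $$ (i, j) \<noteq> 0 then {[i, j]} else {})"
    proof -
      have "xs \<in> B2 \<longleftrightarrow> M $$ (i, j) \<noteq> 0 \<and> xs = [i, j]" for xs
      proof
        assume xs: "xs \<in> B2"
        then have xB: "xs \<in> branches M S i j" "length xs = 2" unfolding B2_def B_def by auto
        note bf = branch_facts[OF xB(1)]
        obtain a b where "xs = [a, b]" using xB(2) by (auto simp: length_Suc_conv numeral_2_eq_2)
        then show "M $$ (i, j) \<noteq> 0 \<and> xs = [i, j]" using bf(2,3,6) by (auto simp: is_edge_def)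
      next
        assume h: "M $$ (i, j) \<noteq> 0 \<and> xs = [i, j]"
        have ea: "edges_along M [i, j]" using h in_n unfolding edges_along_succ by (simp add: is_edge_def n_def)
        have "is_path M [i, j] \<or> is_cycle M [i, j]" using ea unfolding is_path_def is_cycle_def by auto
        then show "xs \<in> B2" using h unfolding B2_def B_def branches_def by auto
      qed
      then show ?thesis by auto
    qed
    show ?thesis unfolding B2e by (simp add: path_weight_2)
  qed
  have "B = B2 \<union> B3" "B2 \<inter> B3 = {}" unfolding B2_def B3_def by auto
  then have "(\<Sum>xs\<in>B. path_weight M xs) = (\<Sum>xs\<in>B2. path_weight M xs) + (\<Sum>xs\<in>B3. path_weight M xs)"
    using fB by (simp add: sum.union_disjoint)
  then show ?thesis using s2 s3 unfolding B_def T_def n_def F_def by simp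
qed

lemma DL_sum_Q:
  assumes fT: "finite T"
  shows "(\<Sum>ys\<in>DL T. M $$ (i, hd ys) * wt M ys * M $$ (last ys, j))
       = (\<Sum>u\<in>T. \<Sum>v\<in>T. M $$ (i, u) * Q M T u v * M $$ (v, j))"
proof -
  have fD: "finite (DL T)" by (rule finite_DL[OF fT])
  have im: "(\<lambda>ys. (hd ys, last ys)) ` DL T \<subseteq> T \<times> T" unfolding DL_def by auto
  have "(\<Sum>u\<in>T. \<Sum>v\<in>T. M $$ (i, u) * Q M T u v * M $$ (v, j))
      = (\<Sum>(u, v)\<in>T \<times> T. M $$ (i, u) * Q M T u v * M $$ (v, j))"
    by (rule sum.cartesian_product)
  also have "\<dots> = (\<Sum>p\<in>T \<times> T. \<Sum>ys\<in>{ys\<in>DL T. (hd ys, last ys) = p}. M $$ (i, hd ys) * wt M ys * M $$ (last ys, j))"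
  proof (rule sum.cong[OF refl])
    fix p assume "p \<in> T \<times> T"
    obtain u v where p: "p = (u, v)" by (cases p)
    have "{ys\<in>DL T. (hd ys, last ys) = p} = {ys\<in>DL T. hd ys = u \<and> last ys = v}" unfolding p by auto
    then show "(case p of (u, v) \<Rightarrow> M $$ (i, u) * Q M T u v * M $$ (v, j))
       = (\<Sum>ys\<in>{ys\<in>DL T. (hd ys, last ys) = p}. M $$ (i, hd ys) * wt M ys * M $$ (last ys, j))"
      unfolding p Q_def by (simp add: sum_distrib_left sum_distrib_right)
  qed
  also have "\<dots> = (\<Sum>ys\<in>DL T. M $$ (i, hd ys) * wt M ys * M $$ (last ys, j))"
    by (rule sum.group[OF fD _ im]) (use fT in simp)
  finally show ?thesis by simp
qed

lemma pick_bij: assumes "finite A" shows "bij_betw (pick A) {0..<card A} A"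
proof -
  have inj: "inj_on (pick A) {0..<card A}"
  proof (rule inj_onI)
    fix x y assume "x \<in> {0..<card A}" "y \<in> {0..<card A}" "pick A x = pick A y"
    then show "x = y" using pick_mono_le[of x A y] pick_mono_le[of y A x] by (metis atLeastLessThan_iff nat_neq_iff order.irrefl)
  qed
  have sub: "pick A ` {0..<card A} \<subseteq> A" using pick_in_set_le by auto
  have "card (pick A ` {0..<card A}) = card A" using card_image[OF inj] by simp
  then have "pick A ` {0..<card A} = A" using card_subset_eq[OF assms sub] by simp
  then show ?thesis using inj unfolding bij_betw_def by simp
qed

lemma sum_pick: "finite A \<Longrightarrow> (\<Sum>c\<in>{0..<card A}. g (pick A c)) = (\<Sum>x\<in>A. g x)"
  using sum.reindex_bij_betw[OF pick_bij] by blast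

lemma pick_inj: "finite A \<Longrightarrow> a < card A \<Longrightarrow> b < card A \<Longrightarrow> pick A a = pick A b \<longleftrightarrow> a = b"
  using pick_bij[of A] unfolding bij_betw_def inj_on_def by auto

lemma mult_entry: "X \<in> carrier_mat r k \<Longrightarrow> Y \<in> carrier_mat k c \<Longrightarrow> a < r \<Longrightarrow> b < c
   \<Longrightarrow> (X * Y) $$ (a, b) = (\<Sum>d\<in>{0..<k}. X $$ (a, d) * Y $$ (d, b))"
  by (simp add: scalar_prod_def)

theorem lemma3:
  fixes M :: "W mat" and n :: nat and S :: "nat set"
  assumes "M \<in> carrier_mat n n"
    and "structural_set M S"
  shows "reduction_defined (M - lam \<cdot>\<^sub>m 1\<^sub>m n) S \<and>
         isospectral_reduction M S = mat_reduction (M - lam \<cdot>\<^sub>m 1\<^sub>m n) S + lam \<cdot>\<^sub>m 1\<^sub>m (card S)"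
proof -
  define N where "N = M - lam \<cdot>\<^sub>m 1\<^sub>m n"
  define T where "T = {0..<n} - S"
  have Mc: "dim_row M = n" "dim_col M = n" using assms(1) by auto
  have Nd: "dim_row N = n" "dim_col N = n" unfolding N_def using Mc by auto
  have Ne: "N $$ (x, y) = M $$ (x, y) - (if x = y then lam else 0)" if "x < n" "y < n" for x y
    unfolding N_def using that Mc by simp
  have Sd: "S \<subseteq> {0..<n}" and acyc: "\<not> has_cycle_in (loopless M) T"
    and diag: "\<And>u. u \<in> T \<Longrightarrow> M $$ (u, u) \<noteq> lam"
    using assms(2) unfolding structural_set_def T_def Mc by auto
  have fS: "finite S" using Sd finite_subset by blast
  have fT: "finite T" unfolding T_def by simp
  have Tn: "T \<subseteq> {0..<dim_row M}" unfolding T_def Mc by auto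
  have sq: "dim_col M = dim_row M" using Mc by simp
  have "{i. i < dim_row N \<and> i \<in> S} = S" using Sd unfolding Nd by auto
  then have cS: "card {i. i < dim_row N \<and> i \<in> S} = card S" by simp
  have "{i. i < dim_row N \<and> i \<in> T} = T" unfolding Nd T_def by auto
  then have cT: "card {i. i < dim_row N \<and> i \<in> T} = card T" by simp
  have cTc: "card {i. i < dim_col N \<and> i \<in> T} = card T" using cT Nd by simp
  have cSc: "card {i. i < dim_col N \<and> i \<in> S} = card S" using cS Nd by simp
  define s where "s = card S"
  define k where "k = card T"
  have pS: "pick S a \<in> S" if "a < s" for a using pick_in_set_le that unfolding s_def by blast
  have pT: "pick T a \<in> T" if "a < k" for a using pick_in_set_le that unfolding k_def by blast
  have pSn: "pick S a < n" if "a < s" for a using pS[OF that] Sd by auto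
  have pTn: "pick T a < n" if "a < k" for a using pT[OF that] unfolding T_def by auto
  have iso: "isospectral_reduction M S $$ (a, b) =
      M $$ (pick S a, pick S b) + (\<Sum>u\<in>T. \<Sum>v\<in>T. M $$ (pick S a, u) * Q M T u v * M $$ (v, pick S b))"
    if "a < s" "b < s" for a b
  proof -
    have "isospectral_reduction M S $$ (a, b) = (\<Sum>xs\<in>branches M S (pick S a) (pick S b). path_weight M xs)"
      unfolding isospectral_reduction_def using that unfolding s_def by (simp add: Let_def)
    also have "\<dots> = M $$ (pick S a, pick S b) + (\<Sum>ys\<in>DL T. M $$ (pick S a, hd ys) * wt M ys * M $$ (last ys, pick S b))"
      using branch_sum[of S M "pick S a" "pick S b"] Sd pS that unfolding Mc T_def by simp
    finally show ?thesis using DL_sum_Q[OF fT] by simp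
  qed
  show ?thesis
  proof (cases "S = {0..<n}")
    case True
    have T0: "T = {}" unfolding T_def True by simp
    have red: "mat_reduction N S = N" unfolding mat_reduction_def Nd True by (simp add: Let_def)
    have "isospectral_reduction M S = N + lam \<cdot>\<^sub>m 1\<^sub>m (card S)"
    proof (rule eq_matI)
      show "dim_row (isospectral_reduction M S) = dim_row (N + lam \<cdot>\<^sub>m 1\<^sub>m (card S))"
        unfolding isospectral_reduction_def True using Nd by simp
      show "dim_col (isospectral_reduction M S) = dim_col (N + lam \<cdot>\<^sub>m 1\<^sub>m (card S))"
        unfolding isospectral_reduction_def True using Nd by simp
      fix a b assume ab: "a < dim_row (N + lam \<cdot>\<^sub>m 1\<^sub>m (card S))" "b < dim_col (N + lam \<cdot>\<^sub>m 1\<^sub>m (card S))"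
      then have ab': "a < n" "b < n" using Nd True by auto
      have pid: "pick S c = c" if "c < n" for c
      proof -
        have "card {x\<in>S. x < pick S c} = c" using card_pick_le[of c S] that True by simp
        moreover have "{x\<in>S. x < pick S c} = {0..<pick S c}" using pS[of c] that True unfolding s_def by auto
        ultimately show ?thesis by simp
      qed
      have sn: "s = n" unfolding s_def True by simp
      show "isospectral_reduction M S $$ (a, b) = (N + lam \<cdot>\<^sub>m 1\<^sub>m (card S)) $$ (a, b)"
        using iso[of a b] ab' sn Nd Ne[OF ab'] pid[OF ab'(1)] pid[OF ab'(2)] unfolding T0 True by simp
    qed
    then show ?thesis unfolding N_def[symmetric] reduction_defined_def red using True Nd by simp
  next
    case False
    define A where "A = submatrix N T T"
    have Adef: "A = submatrix N ({0..<dim_row N} - S) ({0..<dim_row N} - S)" unfolding A_def T_def Nd ..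
    have "dim_row A = card T" unfolding A_def dim_submatrix(1) by (rule cT)
    moreover have "dim_col A = card T" unfolding A_def dim_submatrix(2) by (rule cTc)
    ultimately have Ac: "A \<in> carrier_mat k k" unfolding carrier_mat_def k_def by simp
    have Ae: "A $$ (c, d) = N $$ (pick T c, pick T d)" if "c < k" "d < k" for c d
      unfolding A_def using that cT cTc k_def by (simp add: submatrix_index)
    define Qm where "Qm = mat k k (\<lambda>(c, d). - Q M T (pick T c) (pick T d))"
    have Qc: "Qm \<in> carrier_mat k k" unfolding Qm_def by simp
    have AQ: "A * Qm = 1\<^sub>m k"
    proof (rule eq_matI)
      fix c d assume cd: "c < dim_row (1\<^sub>m k :: W mat)" "d < dim_col (1\<^sub>m k :: W mat)"
      then have cd': "c < k" "d < k" by auto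
      let ?u = "pick T c" and ?v = "pick T d"
      have "(A * Qm) $$ (c, d) = (\<Sum>e\<in>{0..<k}. A $$ (c, e) * Qm $$ (e, d))"
        using Ac Qc cd' by (simp add: scalar_prod_def)
      also have "\<dots> = (\<Sum>e\<in>{0..<k}. N $$ (?u, pick T e) * - Q M T (pick T e) ?v)"
        by (rule sum.cong[OF refl]) (use cd' Ae Qm_def in simp)
      also have "\<dots> = (\<Sum>w\<in>T. N $$ (?u, w) * - Q M T w ?v)"
        unfolding k_def by (rule sum_pick[OF fT, of "\<lambda>w. N $$ (?u, w) * - Q M T w ?v"])
      also have "\<dots> = (\<Sum>w\<in>T. (if ?u = w then lam * Q M T w ?v else 0) - M $$ (?u, w) * Q M T w ?v)"
      proof (rule sum.cong[OF refl])
        fix w assume "w \<in> T"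
        then have "w < n" unfolding T_def by simp
        then show "N $$ (?u, w) * - Q M T w ?v = (if ?u = w then lam * Q M T w ?v else 0) - M $$ (?u, w) * Q M T w ?v"
          unfolding Ne[OF pTn[OF cd'(1)] \<open>w < n\<close>] by (simp add: algebra_simps)
      qed
      also have "\<dots> = lam * Q M T ?u ?v - (\<Sum>w\<in>T. M $$ (?u, w) * Q M T w ?v)"
        using fT pT[OF cd'(1)] by (simp add: sum_subtractf sum.delta)
      also have "\<dots> = (lam - M $$ (?u, ?u)) * Q M T ?u ?v - (\<Sum>w\<in>T-{?u}. M $$ (?u, w) * Q M T w ?v)"
        using fT pT[OF cd'(1)] by (simp add: sum.remove algebra_simps)
      also have "\<dots> = (if ?u = ?v then 1 else 0)"
        by (rule Q_decomp[OF acyc sq Tn pT[OF cd'(1)] pT[OF cd'(2)] diag[OF pT[OF cd'(1)]]])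
      also have "\<dots> = 1\<^sub>m k $$ (c, d)" using cd' pick_inj[OF fT, of c d] unfolding k_def by simp
      finally show "(A * Qm) $$ (c, d) = 1\<^sub>m k $$ (c, d)" .
    qed (use Ac Qc in auto)
    have QA: "Qm * A = 1\<^sub>m k" by (rule mat_mult_left_right_inverse[OF Ac Qc AQ])
    have invA: "invertible_mat A"
      unfolding invertible_mat_def inverts_mat_def square_mat.simps using Ac Qc AQ QA by auto
    define X where "X = (SOME X. inverts_mat A X \<and> inverts_mat X A)"
    have "inverts_mat A Qm \<and> inverts_mat Qm A" unfolding inverts_mat_def using Ac Qc AQ QA by auto
    then have Xp: "inverts_mat A X \<and> inverts_mat X A" unfolding X_def by (rule someI)
    have XQ: "X = Qm"
    proof -
      have AX: "A * X = 1\<^sub>m k" "X * A = 1\<^sub>m (dim_row X)" using Xp Ac unfolding inverts_mat_def by auto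
      have "dim_col X = k" using arg_cong[OF AX(1), of dim_col] by simp
      moreover have "dim_row X = k" using arg_cong[OF AX(2), of dim_col] Ac by simp
      ultimately have Xc: "X \<in> carrier_mat k k" by auto
      have "X = X * (A * Qm)" using AQ Xc by simp
      also have "\<dots> = (X * A) * Qm" using Xc Ac Qc by (simp add: assoc_mult_mat)
      also have "\<dots> = Qm" using AX(2) Xc Qc by simp
      finally show ?thesis .
    qed
    have red: "mat_reduction N S = submatrix N S S - submatrix N S T * Qm * submatrix N T S"
      unfolding mat_reduction_def Let_def using False Nd XQ unfolding X_def A_def T_def by simp
    have rd: "reduction_defined N S" unfolding reduction_defined_def using invA Adef by simp
    have "dim_row (submatrix N S S) = s" unfolding dim_submatrix(1) cS s_def k_def ..
    moreover have "dim_col (submatrix N S S) = s" unfolding dim_submatrix(2) cSc s_def k_def ..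
    ultimately have Dc: "submatrix N S S \<in> carrier_mat s s" unfolding carrier_mat_def by simp
    have "dim_row (submatrix N S T) = s" unfolding dim_submatrix(1) cS s_def k_def ..
    moreover have "dim_col (submatrix N S T) = k" unfolding dim_submatrix(2) cTc s_def k_def ..
    ultimately have Cc: "submatrix N S T \<in> carrier_mat s k" unfolding carrier_mat_def by simp
    have "dim_row (submatrix N T S) = k" unfolding dim_submatrix(1) cT s_def k_def ..
    moreover have "dim_col (submatrix N T S) = s" unfolding dim_submatrix(2) cSc s_def k_def ..
    ultimately have Bc: "submatrix N T S \<in> carrier_mat k s" unfolding carrier_mat_def by simp
    have "isospectral_reduction M S = mat_reduction N S + lam \<cdot>\<^sub>m 1\<^sub>m (card S)"
    proof (rule eq_matI)
      show "dim_row (isospectral_reduction M S) = dim_row (mat_reduction N S + lam \<cdot>\<^sub>m 1\<^sub>m (card S))"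
        unfolding red isospectral_reduction_def using Dc Cc Qc Bc s_def by simp
      show "dim_col (isospectral_reduction M S) = dim_col (mat_reduction N S + lam \<cdot>\<^sub>m 1\<^sub>m (card S))"
        unfolding red isospectral_reduction_def using Dc Cc Qc Bc s_def by simp
      fix a b assume "a < dim_row (mat_reduction N S + lam \<cdot>\<^sub>m 1\<^sub>m (card S))"
        "b < dim_col (mat_reduction N S + lam \<cdot>\<^sub>m 1\<^sub>m (card S))"
      then have ab: "a < s" "b < s" unfolding s_def by auto
      let ?i = "pick S a" and ?j = "pick S b"
      have CQ: "(submatrix N S T * Qm) $$ (a, d) = - (\<Sum>u\<in>T. M $$ (?i, u) * Q M T u (pick T d))"
        if "d < k" for d
      proof -
        have "(submatrix N S T * Qm) $$ (a, d) = (\<Sum>c\<in>{0..<k}. submatrix N S T $$ (a, c) * Qm $$ (c, d))"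
          using Cc Qc ab that by (simp add: scalar_prod_def)
        also have "\<dots> = (\<Sum>c\<in>{0..<k}. - (M $$ (?i, pick T c) * Q M T (pick T c) (pick T d)))"
        proof (rule sum.cong[OF refl])
          fix c assume c: "c \<in> {0..<k}"
          have "?i \<noteq> pick T c" using pS[OF ab(1)] pT[of c] c unfolding T_def by auto
          then show "submatrix N S T $$ (a, c) * Qm $$ (c, d) = - (M $$ (?i, pick T c) * Q M T (pick T c) (pick T d))"
            using c that ab cS cTc Ne[OF pSn[OF ab(1)] pTn[of c]] unfolding Qm_def s_def k_def
            by (simp add: submatrix_index)
        qed
        also have "\<dots> = - (\<Sum>u\<in>T. M $$ (?i, u) * Q M T u (pick T d))"
          unfolding sum_negf k_def by (simp add: sum_pick[OF fT, of "\<lambda>u. M $$ (?i, u) * Q M T u (pick T d)"])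
        finally show ?thesis .
      qed
      have CQB: "(submatrix N S T * Qm * submatrix N T S) $$ (a, b)
          = - (\<Sum>v\<in>T. (\<Sum>u\<in>T. M $$ (?i, u) * Q M T u v) * M $$ (v, ?j))"
      proof -
        have "(submatrix N S T * Qm * submatrix N T S) $$ (a, b)
            = (\<Sum>d\<in>{0..<k}. (submatrix N S T * Qm) $$ (a, d) * submatrix N T S $$ (d, b))"
          using mult_entry[OF mult_carrier_mat[OF Cc Qc] Bc ab] .
        also have "\<dots> = (\<Sum>d\<in>{0..<k}. - ((\<Sum>u\<in>T. M $$ (?i, u) * Q M T u (pick T d)) * M $$ (pick T d, ?j)))"
        proof (rule sum.cong[OF refl])
          fix d assume d: "d \<in> {0..<k}"
          have "?j \<noteq> pick T d" using pS[OF ab(2)] pT[of d] d unfolding T_def by auto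
          then show "(submatrix N S T * Qm) $$ (a, d) * submatrix N T S $$ (d, b) = - ((\<Sum>u\<in>T. M $$ (?i, u) * Q M T u (pick T d)) * M $$ (pick T d, ?j))"
            using CQ[of d] d ab cT cSc Ne[OF pTn[of d] pSn[OF ab(2)]] unfolding s_def k_def
            by (simp add: submatrix_index)
        qed
        also have "\<dots> = - (\<Sum>v\<in>T. (\<Sum>u\<in>T. M $$ (?i, u) * Q M T u v) * M $$ (v, ?j))"
          unfolding sum_negf k_def by (simp add: sum_pick[OF fT, of "\<lambda>v. (\<Sum>u\<in>T. M $$ (?i, u) * Q M T u v) * M $$ (v, ?j)"])
        finally show ?thesis .
      qed
      have D: "submatrix N S S $$ (a, b) = M $$ (?i, ?j) - (if a = b then lam else 0)"
        using ab cS cSc Ne[OF pSn[OF ab(1)] pSn[OF ab(2)]] pick_inj[OF fS, of a b] unfolding s_def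
        by (simp add: submatrix_index)
      have "(mat_reduction N S + lam \<cdot>\<^sub>m 1\<^sub>m (card S)) $$ (a, b)
          = M $$ (?i, ?j) + (\<Sum>v\<in>T. (\<Sum>u\<in>T. M $$ (?i, u) * Q M T u v) * M $$ (v, ?j))"
        unfolding red using ab Dc Cc Qc Bc CQB D unfolding s_def by simp
      also have "\<dots> = isospectral_reduction M S $$ (a, b)"
      proof -
        have "(\<Sum>v\<in>T. (\<Sum>u\<in>T. M $$ (?i, u) * Q M T u v) * M $$ (v, ?j))
            = (\<Sum>v\<in>T. \<Sum>u\<in>T. M $$ (?i, u) * Q M T u v * M $$ (v, ?j))"
          by (simp only: sum_distrib_right)
        also have "\<dots> = (\<Sum>u\<in>T. \<Sum>v\<in>T. M $$ (?i, u) * Q M T u v * M $$ (v, ?j))"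
          by (rule sum.swap)
        finally show ?thesis unfolding iso[OF ab] by simp
      qed
      finally show "isospectral_reduction M S $$ (a, b) = (mat_reduction N S + lam \<cdot>\<^sub>m 1\<^sub>m (card S)) $$ (a, b)" by simp
    qed
    then show ?thesis using rd unfolding N_def by simp
  qed
qed

end
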